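(* Let $Y$ be a topological quandle with the underlying set and quandle operation described below, but with the indiscrete topology. Then $\bar{H}^{1}_{Q}(Y)=\mathbb{Z}^{2}$.
   Context: Setting: For a topological quandle $X$, $C_n(X)$ is the free abelian group generated by the singular $n$-simplices $\sigma:\Delta^n\to X$. We write $\sigma_{[x_1,\dots,x_{n+1}]}$ for a simplex whose $i$-th vertex maps to $x_i$. The boundary map is $\partial_n(\sigma_{[x_1,\dots,x_{n+1}]})=\sum_{i=2}^{n+1}(-1)^i(\sigma_{[x_1,\dots,\hat{x_i},\dots,x_{n+1}]}-\sigma_{[x_1\triangleright x_i,\dots,x_{i-1}\triangleright x_i,\hat{x_i},\dots,x_{n+1}]})$. $\bar{C}^R_n(X)$ is the quotient of $C_n(X)$ that identifies two $n$-simplices whenever they have the same vertices. $\bar{C}^D_n(X)$ is the subcomplex generated by the simplices $\sigma_{[x_1,\dots,x_{n+1}]}$ with $x_i=x_{i+1}$ for some $i$, for $n\ge1$; it is $0$ for $n=0$. Then $\bar{C}^Q_n(X)=\bar{C}^R_n(X)/\bar{C}^D_n(X)$. The group $\bar{H}^n_Q(X)$ is the $n$-th cohomology of $\mathrm{Hom}(\bar{C}^Q_*(X),\mathbb{Z})$. The underlying quandle is $\{1,2,3\}$ with - $1\triangleright j=1$ for all $j$, - $2\triangleright1=3$, $2\triangleright2=2$, $2\triangleright3=2$, - $3\triangleright1=2$, $3\triangleright2=3$, $3\triangleright3=3$. This is the operation table $M$ with rows $(1,1,1),(3,2,2),(2,3,3)$. *)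

theory Defs
  imports "HOL-Homology.Homology" "HOL-Algebra.Elementary_Groups" "HOL-Algebra.Coset"
begin

definition indiscrete_topology :: "'a set \<Rightarrow> 'a topology" where
  "indiscrete_topology S = topology (\<lambda>U. U = {} \<or> U = S)"

definition qop :: "nat \<Rightarrow> nat \<Rightarrow> nat" where
  "qop x y = (if x = 1 then 1
              else if x = 2 then (if y = 1 then 3 else 2)
              else if x = 3 then (if y = 1 then 2 else 3)
              else x)"

definition Y_top :: "nat topology" where
  "Y_top = indiscrete_topology {1,2,3}"

definition simplex_vertex :: "nat \<Rightarrow> (nat \<Rightarrow> real)" where
  "simplex_vertex i = (\<lambda>j. if j = i then 1 else 0)"

definition vertex_tuple :: "nat \<Rightarrow> ((nat \<Rightarrow> real) \<Rightarrow> 'a) \<Rightarrow> 'a list" where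
  "vertex_tuple n \<sigma> = map (\<lambda>i. \<sigma> (simplex_vertex i)) [0..<Suc n]"

text \<open>Basis of the quotient \<open>C^R_n(X)\<close>: the vertex tuples of singular n-simplices
  (simplices with the same vertices are identified).\<close>
definition realized_tuples :: "nat \<Rightarrow> 'a topology \<Rightarrow> 'a list set" where
  "realized_tuples n X = {vertex_tuple n \<sigma> | \<sigma>. singular_simplex n X \<sigma>}"

definition degenerate_tuple :: "'a list \<Rightarrow> bool" where
  "degenerate_tuple t \<longleftrightarrow> (\<exists>i. Suc i < length t \<and> t ! i = t ! Suc i)"

text \<open>Basis of \<open>C^Q_n(X) = C^R_n(X)/C^D_n(X)\<close>.\<close>
definition quandle_basis :: "nat \<Rightarrow> 'a topology \<Rightarrow> 'a list set" where
  "quandle_basis n X = {t \<in> realized_tuples n X. \<not> degenerate_tuple t}"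

text \<open>Faces (0-based index k, corresponding to i = k+1 in the paper).\<close>
definition face_del :: "nat \<Rightarrow> 'a list \<Rightarrow> 'a list" where
  "face_del k t = take k t @ drop (Suc k) t"

definition face_act :: "('a \<Rightarrow> 'a \<Rightarrow> 'a) \<Rightarrow> nat \<Rightarrow> 'a list \<Rightarrow> 'a list" where
  "face_act op k t = map (\<lambda>x. op x (t ! k)) (take k t) @ drop (Suc k) t"

text \<open>Cochain group \<open>Hom(C^Q_n(X), Z)\<close>, represented as integer functions on tuples
  vanishing outside the basis of \<open>C^Q_n(X)\<close>, with pointwise addition.\<close>
definition cochain_group :: "'a topology \<Rightarrow> nat \<Rightarrow> ('a list \<Rightarrow> int) monoid" where
  "cochain_group X n =
     \<lparr>carrier = {f. \<forall>t. t \<notin> quandle_basis n X \<longrightarrow> f t = 0},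
      mult = (\<lambda>f g t. f t + g t), one = (\<lambda>t. 0)\<rparr>"

text \<open>Coboundary \<open>\<delta>^n f = f \<circ> \<partial>_{n+1}\<close>; the paper's sum over i = 2..n+2 with sign (-1)^i.\<close>
definition qcobound :: "('a \<Rightarrow> 'a \<Rightarrow> 'a) \<Rightarrow> 'a topology \<Rightarrow> nat \<Rightarrow> ('a list \<Rightarrow> int) \<Rightarrow> 'a list \<Rightarrow> int" where
  "qcobound op X n f t =
     (if t \<in> quandle_basis (Suc n) X
      then (\<Sum>k\<in>{1..Suc n}. (-1) ^ (Suc k) * (f (face_del k t) - f (face_act op k t)))
      else 0)"

definition cocycles :: "('a \<Rightarrow> 'a \<Rightarrow> 'a) \<Rightarrow> 'a topology \<Rightarrow> nat \<Rightarrow> ('a list \<Rightarrow> int) set" where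
  "cocycles op X n = {f \<in> carrier (cochain_group X n). qcobound op X n f = (\<lambda>t. 0)}"

definition coboundaries :: "('a \<Rightarrow> 'a \<Rightarrow> 'a) \<Rightarrow> 'a topology \<Rightarrow> nat \<Rightarrow> ('a list \<Rightarrow> int) set" where
  "coboundaries op X n =
     (case n of 0 \<Rightarrow> {\<lambda>t. 0}
      | Suc m \<Rightarrow> qcobound op X m ` carrier (cochain_group X m))"

definition quandle_cohomology :: "('a \<Rightarrow> 'a \<Rightarrow> 'a) \<Rightarrow> 'a topology \<Rightarrow> nat \<Rightarrow> ('a list \<Rightarrow> int) set monoid" where
  "quandle_cohomology op X n =
     ((cochain_group X n)\<lparr>carrier := cocycles op X n\<rparr>) Mod (coboundaries op X n)"

end

theory Submission
  imports Defs
begin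


lemma istop: "istopology (\<lambda>U. U = {} \<or> U = (S::'a set))"
  unfolding istopology_def
proof (intro conjI allI impI)
  fix K :: "'a set set" assume "\<forall>K\<in>K. K = {} \<or> K = S"
  then show "\<Union>K = {} \<or> \<Union>K = S" by (cases "S \<in> K") auto
qed auto

lemma openin_Y: "openin Y_top U \<longleftrightarrow> U = {} \<or> U = {1,2,3}"
  unfolding Y_top_def indiscrete_topology_def by (simp add: topology_inverse'[OF istop])

lemma topspace_Y: "topspace Y_top = {1,2,3}"
  unfolding topspace_def openin_Y by auto

lemma cont_Y: "continuous_map X Y_top f \<longleftrightarrow> f ` topspace X \<subseteq> {1,2,3}"
  unfolding continuous_map_def topspace_Y openin_Y
proof safe
  fix U assume "f ` topspace X \<subseteq> {1,2,3}"
  then have "{x \<in> topspace X. f x \<in> {1,2,3}} = topspace X" by auto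
  then show "openin X {x \<in> topspace X. f x \<in> {1,2,3}}" by simp
qed auto

lemma vertex_in: "i \<le> n \<Longrightarrow> simplex_vertex i \<in> standard_simplex n"
  unfolding simplex_vertex_def standard_simplex_def by auto

lemma realized_Y: "realized_tuples n Y_top = {t. length t = Suc n \<and> set t \<subseteq> {1,2,3}}"
proof (rule subset_antisym; rule subsetI)
  fix t assume "t \<in> realized_tuples n Y_top"
  then obtain \<sigma> where t: "t = vertex_tuple n \<sigma>" and s: "singular_simplex n Y_top \<sigma>"
    unfolding realized_tuples_def by auto
  then have "\<sigma> ` standard_simplex n \<subseteq> {1,2,3}"
    unfolding singular_simplex_def cont_Y topspace_standard_simplex by simp
  then show "t \<in> {t. length t = Suc n \<and> set t \<subseteq> {1,2,3}}"
  proof -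
    have "set t = (\<lambda>i. \<sigma> (simplex_vertex i)) ` {0..<Suc n}" unfolding t vertex_tuple_def by (simp del: upt_Suc)
    also have "\<dots> \<subseteq> {1,2,3}"
    proof (rule image_subsetI)
      fix i assume "i \<in> {0..<Suc n}"
      then have "simplex_vertex i \<in> standard_simplex n" using vertex_in by simp
      then show "\<sigma> (simplex_vertex i) \<in> {1,2,3}" using \<open>\<sigma> ` standard_simplex n \<subseteq> {1,2,3}\<close> by blast
    qed
    finally show ?thesis unfolding t vertex_tuple_def by (simp only: mem_Collect_eq length_map length_upt) simp
  qed
next
  fix t :: "nat list" assume "t \<in> {t. length t = Suc n \<and> set t \<subseteq> {1,2,3}}"
  then have L: "length t = Suc n" and S: "set t \<subseteq> {1,2,3}" by auto
  define \<sigma> where "\<sigma> x = (if x \<in> standard_simplex n then t ! min n (LEAST j. x j = 1) else undefined)" for x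
  have "singular_simplex n Y_top \<sigma>"
    unfolding singular_simplex_def cont_Y topspace_standard_simplex
  proof
    show "\<sigma> ` standard_simplex n \<subseteq> {1,2,3}"
    proof
      fix y assume "y \<in> \<sigma> ` standard_simplex n"
      then obtain x where x: "x \<in> standard_simplex n" "y = \<sigma> x" by blast
      have "min n (LEAST j. x j = 1) < length t" using L by simp
      then have "t ! min n (LEAST j. x j = 1) \<in> set t" by (rule nth_mem)
      moreover have "y = t ! min n (LEAST j. x j = 1)" using x unfolding \<sigma>_def by simp
      ultimately show "y \<in> {1,2,3}" using S by blast
    qed
    show "\<sigma> \<in> extensional (standard_simplex n)" unfolding \<sigma>_def extensional_def by auto
  qed
  moreover have "vertex_tuple n \<sigma> = t"
  proof (rule nth_equalityI)
    show "length (vertex_tuple n \<sigma>) = length t" using L by (simp add: vertex_tuple_def)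
    fix i assume "i < length (vertex_tuple n \<sigma>)"
    then have i: "i \<le> n" by (simp add: vertex_tuple_def)
    have "(LEAST j. simplex_vertex i j = 1) = i"
      by (rule Least_equality) (auto simp: simplex_vertex_def split: if_splits)
    then show "vertex_tuple n \<sigma> ! i = t ! i"
    proof -
      have "vertex_tuple n \<sigma> ! i = \<sigma> (simplex_vertex i)" unfolding vertex_tuple_def
        using i by (simp del: upt_Suc)
      also have "\<dots> = t ! min n (LEAST j. simplex_vertex i j = 1)" unfolding \<sigma>_def using vertex_in[OF i] by simp
      finally show ?thesis using \<open>(LEAST j. simplex_vertex i j = 1) = i\<close> i by (simp add: min_absorb2)
    qed
  qed
  ultimately show "t \<in> realized_tuples n Y_top" unfolding realized_tuples_def by blast
qed

lemma qb_Y: "quandle_basis n Y_top = {t. length t = Suc n \<and> set t \<subseteq> {1,2,3} \<and> \<not> degenerate_tuple t}"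
  unfolding quandle_basis_def realized_Y by auto


lemma len2: "length t = Suc (Suc 0) \<longleftrightarrow> (\<exists>a b. t = [a,b])"
  by (auto simp: length_Suc_conv)
lemma len3: "length t = Suc (Suc (Suc 0)) \<longleftrightarrow> (\<exists>a b c. t = [a,b,c])"
  by (auto simp: length_Suc_conv)
lemma len1: "length t = Suc 0 \<longleftrightarrow> (\<exists>a. t = [a])"
  by (auto simp: length_Suc_conv)

lemma deg1: "\<not> degenerate_tuple [a]" by (simp add: degenerate_tuple_def)
lemma deg2: "degenerate_tuple [a,b] \<longleftrightarrow> a = b"
  unfolding degenerate_tuple_def by (auto simp: less_Suc_eq)
lemma deg3: "degenerate_tuple [a,b,c] \<longleftrightarrow> a = b \<or> b = c"
  unfolding degenerate_tuple_def by (auto simp: less_Suc_eq)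


lemma qb0: "t \<in> quandle_basis 0 Y_top \<longleftrightarrow> t \<in> {[1],[2],[3]}"
  unfolding qb_Y by (auto simp: len1 deg1)
lemma qb1': "t \<in> quandle_basis 1 Y_top \<longleftrightarrow> (\<exists>a b. t = [a,b] \<and> a \<in> {1,2,3} \<and> b \<in> {1,2,3} \<and> a \<noteq> b)"
  unfolding qb_Y by (auto simp: len2 deg2)
lemma qb1: "t \<in> quandle_basis 1 Y_top \<longleftrightarrow> t \<in> {[1,2],[1,3],[2,1],[2,3],[3,1],[3,2]}"
  unfolding qb1' by auto
lemma qb2': "t \<in> quandle_basis 2 Y_top \<longleftrightarrow> (\<exists>a b c. t = [a,b,c] \<and> a \<in> {1,2,3} \<and> b \<in> {1,2,3} \<and> c \<in> {1,2,3} \<and> a \<noteq> b \<and> b \<noteq> c)"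
  unfolding qb_Y numeral_2_eq_2 by (auto simp: len3 deg3)
lemma qb2: "t \<in> quandle_basis 2 Y_top \<longleftrightarrow> t \<in> {[1,2,1],[1,2,3],[1,3,1],[1,3,2],[2,1,2],[2,1,3],
   [2,3,1],[2,3,2],[3,1,2],[3,1,3],[3,2,1],[3,2,3]}"
  unfolding qb2' by auto


lemma carrier_cg: "f \<in> carrier (cochain_group X n) \<longleftrightarrow> (\<forall>t. t \<notin> quandle_basis n X \<longrightarrow> f t = 0)"
  by (simp add: cochain_group_def)

lemma qcob1_eq: "qcobound op X 1 f [a,b,c] = (if [a,b,c] \<in> quandle_basis 2 X
   then f[a,c] - f[op a b, c] - f[a,b] + f[op a c, op b c] else 0)"
proof -
  have e: "{1..Suc 1} = {1::nat,2}" by auto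
  show ?thesis unfolding qcobound_def e
    by (simp add: face_del_def face_act_def numeral_2_eq_2)
qed

lemma qcob0_eq: "qcobound op X 0 g [a,b] = (if [a,b] \<in> quandle_basis 1 X
   then g[a] - g[op a b] else 0)"
  unfolding qcobound_def by (simp add: face_del_def face_act_def)

lemma qop_simps: "qop 1 y = 1" "qop 2 1 = 3" "qop 2 2 = 2" "qop 2 3 = 2" "qop 3 1 = 2" "qop 3 2 = 3" "qop 3 3 = 3"
  by (simp_all add: qop_def)

lemma cocyc: "f \<in> cocycles qop Y_top 1 \<longleftrightarrow> f \<in> carrier (cochain_group Y_top 1) \<and> f[2,3] = 0 \<and> f[3,2] = 0 \<and> f[1,2] = f[1,3]"
proof (cases "f \<in> carrier (cochain_group Y_top 1)")
  case True
  then have z: "f[1,1] = 0" "f[2,2] = 0" "f[3,3] = 0" unfolding carrier_cg qb1 by auto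
  have "qcobound qop Y_top 1 f = (\<lambda>t. 0) \<longleftrightarrow> (\<forall>t. t \<in> quandle_basis 2 Y_top \<longrightarrow> qcobound qop Y_top 1 f t = 0)"
  proof -
    have nz: "qcobound qop Y_top 1 f t = 0" if "t \<notin> quandle_basis 2 Y_top" for t
      using that unfolding qcobound_def numeral_2_eq_2 One_nat_def by simp
    show ?thesis using nz by (auto simp: fun_eq_iff)
  qed
  also have "\<dots> \<longleftrightarrow> (\<forall>t \<in> {[1,2,1],[1,2,3],[1,3,1],[1,3,2],[2,1,2],[2,1,3],
   [2,3,1],[2,3,2],[3,1,2],[3,1,3],[3,2,1],[3,2,3]}. qcobound qop Y_top 1 f t = 0)"
    unfolding qb2 by blast
  also have "\<dots> \<longleftrightarrow> f[2,3] = 0 \<and> f[3,2] = 0 \<and> f[1,2] = f[1,3]"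
    by (simp only: ball_simps qcob1_eq qb2 insert_iff simp_thms list.inject empty_iff qop_simps z) (auto simp: qop_simps z)
  finally show ?thesis using True by (simp add: cocycles_def)
qed (simp add: cocycles_def)



abbreviation GG where "GG \<equiv> (cochain_group Y_top 1)\<lparr>carrier := cocycles qop Y_top 1\<rparr>"
abbreviation HH where "HH \<equiv> DirProd integer_group integer_group"
definition phi :: "(nat list \<Rightarrow> int) \<Rightarrow> int \<times> int" where
  "phi f = (f [1,2], f [2,1] + f [3,1])"

lemma GG_mult: "x \<otimes>\<^bsub>GG\<^esub> y = (\<lambda>t. x t + y t)" by (simp add: cochain_group_def)
lemma GG_one: "\<one>\<^bsub>GG\<^esub> = (\<lambda>t. 0)" by (simp add: cochain_group_def)
lemma GG_carrier: "carrier GG = cocycles qop Y_top 1" by simp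

lemma qop_simps2: "qop (Suc 0) y = Suc 0" "qop 2 (Suc 0) = 3" "qop 3 (Suc 0) = 2"
  by (simp_all add: qop_def)

lemma group_GG: "comm_group GG"
proof (rule comm_groupI)
  fix x assume "x \<in> carrier GG"
  then show "\<exists>y\<in>carrier GG. y \<otimes>\<^bsub>GG\<^esub> x = \<one>\<^bsub>GG\<^esub>"
    by (intro bexI[where x="\<lambda>t. - x t"]) (auto simp: cochain_group_def cocyc cocyc[unfolded One_nat_def] carrier_cg)
qed (auto simp: cochain_group_def cocyc cocyc[unfolded One_nat_def] carrier_cg)

lemma hom_phi: "group_hom GG HH phi"
  unfolding group_hom_def group_hom_axioms_def
proof (intro conjI)
  show "group GG" using group_GG by (rule comm_group.axioms)
  show "group HH" by (simp add: DirProd_group)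
  show "phi \<in> hom GG HH" unfolding hom_def
    by (auto simp: cochain_group_def phi_def integer_group_def)
qed

lemma surj_phi: "phi ` carrier GG = carrier HH"
proof -
  have "(m,n) \<in> phi ` cocycles qop Y_top 1" for m n
  proof
    define f where "f t = (if t = [1,2] \<or> t = [1,3] then m else if t = [2,1] then n else 0)" for t :: "nat list"
    show "(m,n) = phi f" by (simp add: phi_def f_def)
    show "f \<in> cocycles qop Y_top 1" unfolding cocyc carrier_cg qb1 by (simp add: f_def)
  qed
  then show ?thesis by (auto simp: integer_group_def)
qed

lemma cob1: "coboundaries qop Y_top 1 = qcobound qop Y_top 0 ` carrier (cochain_group Y_top 0)"
  by (simp add: coboundaries_def)

lemma kernel_phi: "kernel GG HH phi = coboundaries qop Y_top 1"
proof (rule equalityI; rule subsetI)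
  fix f assume "f \<in> kernel GG HH phi"
  then have f: "f \<in> cocycles qop Y_top 1" "f [1,2] = 0" "f [2,1] + f [3,1] = 0"
    by (auto simp: kernel_def phi_def integer_group_def)
  then have f0: "\<forall>t. t \<notin> quandle_basis 1 Y_top \<longrightarrow> f t = 0" "f[2,3] = 0" "f[3,2] = 0" "f[1,3] = 0"
    unfolding cocyc carrier_cg by auto
  define g where "g t = (if t = [2] then f [2,1] else 0)" for t :: "nat list"
  have g: "g \<in> carrier (cochain_group Y_top 0)" unfolding carrier_cg qb0 by (simp add: g_def)
  have "qcobound qop Y_top 0 g = f"
  proof
    fix t
    show "qcobound qop Y_top 0 g t = f t"
    proof (cases "t \<in> quandle_basis 1 Y_top")
      case True
      then show ?thesis unfolding qb1 using f f0 by (auto simp: qcob0_eq qb1 qop_simps qop_simps2 g_def)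
    next
      case False
      then show ?thesis using f0 by (simp add: qcobound_def)
    qed
  qed
  then show "f \<in> coboundaries qop Y_top 1" unfolding cob1 using g by blast
next
  fix f assume "f \<in> coboundaries qop Y_top 1"
  then obtain g where g: "g \<in> carrier (cochain_group Y_top 0)" and f: "f = qcobound qop Y_top 0 g"
    unfolding cob1 by blast
  have c: "f \<in> carrier (cochain_group Y_top 1)" unfolding carrier_cg f
    by (simp add: qcobound_def)
  have "f \<in> cocycles qop Y_top 1" unfolding cocyc using c
    by (simp add: f qcob0_eq qb1 qb1[unfolded One_nat_def] qop_simps qop_simps2)
  moreover have "phi f = (0,0)" by (simp add: phi_def f qcob0_eq qb1 qb1[unfolded One_nat_def] qop_simps qop_simps2)
  ultimately show "f \<in> kernel GG HH phi" by (simp add: kernel_def integer_group_def)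
qed

theorem mainTheorem16:
  shows "quandle_cohomology qop Y_top 1 \<cong> DirProd integer_group integer_group"
proof -
  have "quandle_cohomology qop Y_top 1 = GG Mod (kernel GG HH phi)"
    unfolding quandle_cohomology_def kernel_phi ..
  then show ?thesis using group_hom.FactGroup_iso[OF hom_phi surj_phi] by simp
qed

end
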